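(* Let $n\ge 4$ and let $x$ be any vertex of the path $P_n$. Then there exists a $(P_n,x)$-well path 2-placement.
   Context: $P_n$ is the path on $n$ vertices; $dist$ is distance in $P_n$, $d(y)$ the degree of $y$ in $P_n$, $N(x)$ the set of neighbors of $x$. A permutation $\sigma$ of $V(P_n)$ is a 2-placement of $P_n$ if for every edge $ab$ of $P_n$, $\sigma(a)\sigma(b)$ is not an edge of $P_n$. $P_n^k$ is the $k$-th power of $P_n$; $\sigma(P_n)\subseteq P_n^k$ means $dist(\sigma(a),\sigma(b))\le k$ for every edge $ab$ of $P_n$. A fixed-point-free permutation $\sigma$ of $V(P_n)$ is a $(P_n,x)$-well path 2-placement if: (1) $\sigma$ is a 2-placement of $P_n$; (2) $\sigma(P_n)\subseteq P_n^6$; (3) $dist(x,\sigma(x))\le 2$; (4) $dist(y,\sigma(y))\le 3$ for every $y\in N(x)$ and for every $y$ with $d(y)=1$; (5) every cycle of $\sigma$ (in its disjoint cycle decomposition) has length at most $5$. *)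

theory Defs
  imports "HOL-Combinatorics.Permutations"
begin

definition path_edge :: "nat \<Rightarrow> nat \<Rightarrow> nat \<Rightarrow> bool" where
  "path_edge n a b \<longleftrightarrow> a < n \<and> b < n \<and> (a + 1 = b \<or> b + 1 = a)"

definition path_dist :: "nat \<Rightarrow> nat \<Rightarrow> nat" where
  "path_dist a b = (if a \<le> b then b - a else a - b)"

definition path_nbrs :: "nat \<Rightarrow> nat \<Rightarrow> nat set" where
  "path_nbrs n x = {y. path_edge n x y}"

definition path_deg :: "nat \<Rightarrow> nat \<Rightarrow> nat" where
  "path_deg n y = card (path_nbrs n y)"

definition two_placement :: "nat \<Rightarrow> (nat \<Rightarrow> nat) \<Rightarrow> bool" where
  "two_placement n \<sigma> \<longleftrightarrow> \<sigma> permutes {0..<n} \<and>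
     (\<forall>a b. path_edge n a b \<longrightarrow> \<not> path_edge n (\<sigma> a) (\<sigma> b))"

definition in_path_power :: "nat \<Rightarrow> nat \<Rightarrow> (nat \<Rightarrow> nat) \<Rightarrow> bool" where
  "in_path_power n k \<sigma> \<longleftrightarrow> (\<forall>a b. path_edge n a b \<longrightarrow> path_dist (\<sigma> a) (\<sigma> b) \<le> k)"

text \<open>Every cycle of sigma has length at most m (the cycle through v has length
  equal to the least k \<ge> 1 with sigma^k v = v).\<close>
definition cycles_le :: "nat \<Rightarrow> nat \<Rightarrow> (nat \<Rightarrow> nat) \<Rightarrow> bool" where
  "cycles_le n m \<sigma> \<longleftrightarrow> (\<forall>v < n. \<exists>k. 1 \<le> k \<and> k \<le> m \<and> (\<sigma> ^^ k) v = v)"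

definition well_path_2placement :: "nat \<Rightarrow> nat \<Rightarrow> (nat \<Rightarrow> nat) \<Rightarrow> bool" where
  "well_path_2placement n x \<sigma> \<longleftrightarrow>
     \<sigma> permutes {0..<n} \<and> (\<forall>v < n. \<sigma> v \<noteq> v) \<and>
     two_placement n \<sigma> \<and>
     in_path_power n 6 \<sigma> \<and>
     path_dist x (\<sigma> x) \<le> 2 \<and>
     (\<forall>y \<in> path_nbrs n x. path_dist y (\<sigma> y) \<le> 3) \<and>
     (\<forall>y < n. path_deg n y = 1 \<longrightarrow> path_dist y (\<sigma> y) \<le> 3) \<and>
     cycles_le n 5 \<sigma>"

end

theory Submission
  imports Defs
begin
definition p4 :: "nat \<Rightarrow> nat" where "p4 r = (if r=0 then 2 else if r=1 then 0 else if r=2 then 3 else 1)"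
definition p5 :: "nat \<Rightarrow> nat" where "p5 r = (if r=0 then 2 else if r=1 then 0 else if r=2 then 4 else if r = 3 then 1 else 3)"
definition sg :: "nat \<Rightarrow> nat \<Rightarrow> nat \<Rightarrow> nat" where
 "sg n a i = (if i < 4*a then 4*(i div 4) + p4 (i mod 4) else if i < n then 4*a + 5*((i - 4*a) div 5) + p5 ((i-4*a) mod 5) else i)"

lemma p4_lt: "p4 r < 4" by (simp add: p4_def)
lemma p5_lt: "p5 r < 5" by (simp add: p5_def)

lemma low: assumes "r < 4" "4*q+r < 4*a" shows "sg n a (4*q+r) = 4*q + p4 r"
proof -
  have "(4*q+r) div 4 = q" "(4*q+r) mod 4 = r" using assms by presburger+
  then show ?thesis using assms by (simp add: sg_def)
qed
lemma high: assumes "r < 5" "4*a+5*q+r < n" shows "sg n a (4*a+5*q+r) = 4*a+5*q + p5 r"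
proof -
  have "(5*q+r) div 5 = q" "(5*q+r) mod 5 = r" using assms by presburger+
  then show ?thesis using assms by (simp add: sg_def)
qed

lemma edge: assumes "n = 4*a+5*b" "i+1<n"
  shows "2 \<le> path_dist (sg n a i) (sg n a (i+1)) \<and> path_dist (sg n a i) (sg n a (i+1)) \<le> 6"
proof -
  consider "i+1 < 4*a" | "i+1 = 4*a" | "4*a \<le> i" by linarith
  then show ?thesis
  proof cases
    case 1
    define q r where "q = i div 4" and "r = i mod 4"
    have i: "i = 4*q+r" "r < 4" unfolding q_def r_def by auto
    have s1: "sg n a i = 4*q + p4 r" using low[of r q a n] i 1 by simp
    show ?thesis
    proof (cases "r < 3")
      case True
      have "sg n a (i+1) = 4*q + p4 (r+1)" using low[of "r+1" q a n] i 1 True by simp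
      moreover have "r = 0 \<or> r = 1 \<or> r = 2" using True by linarith
      ultimately show ?thesis using s1 by (auto simp: p4_def path_dist_def)
    next
      case False
      have r3: "r = 3" using False i by linarith
      have "sg n a (i+1) = 4*(q+1) + p4 0" using low[of "0" "q+1" a n] i 1 r3 by simp
      moreover note r3
      ultimately show ?thesis using s1 by (auto simp: p4_def path_dist_def)
    qed
  next
    case 2
    then obtain c where c: "a = Suc c" by (cases a) auto
    have i: "i = 4*c + 3" using 2 c by simp
    have "sg n a i = 4*c+p4 3" using low[of 3 c a n] 2 i by simp
    moreover have "sg n a (i+1) = 4*a+5*0+p5 0" using high[of 0 a 0 n] 2 assms by simp
    ultimately show ?thesis using c by (simp add: path_dist_def p4_def p5_def)
  next
    case 3
    define q r where "q = (i-4*a) div 5" and "r = (i-4*a) mod 5"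
    have i: "i = 4*a+5*q+r" "r < 5" unfolding q_def r_def using 3 by auto
    have s1: "sg n a i = 4*a+5*q + p5 r" using high[of r a q n] i assms by simp
    show ?thesis
    proof (cases "r < 4")
      case True
      have "sg n a (i+1) = 4*a+5*q + p5 (r+1)" using high[of "r+1" a q n] i assms True by simp
      moreover have "r = 0 \<or> r = 1 \<or> r = 2 \<or> r = 3" using True by linarith
      ultimately show ?thesis using s1 by (auto simp: p5_def path_dist_def)
    next
      case False
      have r4: "r = 4" using False i by linarith
      have e: "i+1 = 4*a+5*(q+1)+0" using i r4 by simp
      have "sg n a (i+1) = 4*a+5*(q+1) + p5 0" unfolding e by (rule high) (use assms e in auto)
      moreover note r4
      ultimately show ?thesis using s1 by (auto simp: p5_def path_dist_def)
    qed
  qed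
qed

lemma disp: assumes "n = 4*a+5*b" "i<n"
  shows "path_dist i (sg n a i) \<le> 2 \<and> sg n a i \<noteq> i \<and> sg n a i < n"
proof (cases "i < 4*a")
  case True
    define q r where "q = i div 4" and "r = i mod 4"
    have i: "i = 4*q+r" "r < 4" unfolding q_def r_def by auto
    have s1: "sg n a i = 4*q + p4 r" using low[of r q a n] i True by simp
    have "4*q+4 \<le> 4*a" using i True by presburger
    moreover have "r = 0 \<or> r = 1 \<or> r = 2 \<or> r = 3" using i by linarith
    ultimately show ?thesis using s1 i assms by (auto simp: p4_def path_dist_def)
next
  case False
    define q r where "q = (i-4*a) div 5" and "r = (i-4*a) mod 5"
    have i: "i = 4*a+5*q+r" "r < 5" unfolding q_def r_def using False by auto
    have s1: "sg n a i = 4*a+5*q + p5 r" using high[of r a q n] i assms by simp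
    have "4*a+5*q+5 \<le> n" using i assms by presburger
    moreover have "r = 0 \<or> r = 1 \<or> r = 2 \<or> r = 3 \<or> r = 4" using i by linarith
    ultimately show ?thesis using s1 i assms by (auto simp: p5_def path_dist_def)
qed

lemma cyc: assumes "n = 4*a+5*b" "i<n"
  shows "\<exists>k. 1 \<le> k \<and> k \<le> 5 \<and> (sg n a ^^ k) i = i"
proof (cases "i < 4*a")
  case True
  define q r where "q = i div 4" and "r = i mod 4"
  have i: "i = 4*q+r" "r < 4" unfolding q_def r_def by auto
  have "4*q+4 \<le> 4*a" using i True by presburger
  have gen: "(sg n a ^^ k) (4*q+r') = 4*q + (p4 ^^ k) r'" if "r' < 4" for k r'
  proof (induction k)
    case 0 then show ?case by simp
  next
    case (Suc k)
    have "(p4 ^^ k) r' < 4" using that by (cases k) (simp_all add: p4_lt)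
    then show ?case using Suc low[of "(p4 ^^ k) r'" q a n] \<open>4*q+4 \<le> 4*a\<close> by simp
  qed
  have "(p4 ^^ 4) r = r" using i(2) unfolding p4_def
    by (auto simp: numeral_eq_Suc) 
  then show ?thesis using gen[of r 4] i by (intro exI[of _ 4]) simp
next
  case False
  define q r where "q = (i-4*a) div 5" and "r = (i-4*a) mod 5"
  have i: "i = 4*a+5*q+r" "r < 5" unfolding q_def r_def using False by auto
  have "4*a+5*q+5 \<le> n" using i assms by presburger
  have gen: "(sg n a ^^ k) (4*a+5*q+r') = 4*a+5*q + (p5 ^^ k) r'" if "r' < 5" for k r'
  proof (induction k)
    case 0 then show ?case by simp
  next
    case (Suc k)
    have "(p5 ^^ k) r' < 5" using that by (cases k) (simp_all add: p5_lt)
    then show ?case using Suc high[of "(p5 ^^ k) r'" a q n] \<open>4*a+5*q+5 \<le> n\<close> by simp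
  qed
  have "(p5 ^^ 5) r = r" using i(2) unfolding p5_def
    by (auto simp: numeral_eq_Suc) 
  then show ?thesis using gen[of r 5] i by (intro exI[of _ 5]) simp
qed

lemma perm_gen:
  fixes \<sigma> :: "nat \<Rightarrow> nat"
  assumes inb: "\<And>i. i < n \<Longrightarrow> \<sigma> i < n" and out: "\<And>i. \<not> i < n \<Longrightarrow> \<sigma> i = i"
    and cy: "\<And>i. i < n \<Longrightarrow> \<exists>k. 1 \<le> k \<and> k \<le> 5 \<and> (\<sigma> ^^ k) i = i"
  shows "\<sigma> permutes {0..<n}"
proof (rule bij_imp_permutes)
  have pw: "(\<sigma> ^^ m) i < n" if "i < n" for i m
    using that by (induction m) (auto intro: inb)
  have sub: "\<sigma> ` {0..<n} \<subseteq> {0..<n}" using inb by auto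
  have sup: "{0..<n} \<subseteq> \<sigma> ` {0..<n}"
  proof
    fix i assume "i \<in> {0..<n}"
    then have i: "i < n" by simp
    obtain k where k: "1 \<le> k" "(\<sigma> ^^ k) i = i" using cy[OF i] by blast
    have "(\<sigma> ^^ k) i = \<sigma> ((\<sigma> ^^ (k-1)) i)" using k(1)
      by (metis Suc_diff_le comp_apply diff_Suc_1 funpow.simps(2))
    then show "i \<in> \<sigma> ` {0..<n}" using k pw[OF i, of "k-1"] by (metis atLeastLessThan_iff image_eqI zero_le)
  qed
  have eq: "\<sigma> ` {0..<n} = {0..<n}" using sub sup by blast
  then have "inj_on \<sigma> {0..<n}" by (intro eq_card_imp_inj_on) auto
  then show "bij_betw \<sigma> {0..<n} {0..<n}" using eq by (simp add: bij_betw_def)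
next
  fix x assume "x \<notin> {0..<n}" then show "\<sigma> x = x" using out by simp
qed

lemma nbrs_lt: "y \<in> path_nbrs n x \<Longrightarrow> y < n"
  by (simp add: path_nbrs_def path_edge_def)

lemma main_case:
  assumes "n = 4*a+5*b" "x < n"
  shows "well_path_2placement n x (sg n a)"
proof -
  have dp: "\<And>i. i < n \<Longrightarrow> path_dist i (sg n a i) \<le> 2 \<and> sg n a i \<noteq> i \<and> sg n a i < n"
    using disp assms(1) by blast
  have cy: "\<And>i. i < n \<Longrightarrow> \<exists>k. 1 \<le> k \<and> k \<le> 5 \<and> (sg n a ^^ k) i = i"
    using cyc assms(1) by blast
  have out: "\<And>i. \<not> i < n \<Longrightarrow> sg n a i = i" using assms(1) by (simp add: sg_def)
  have pm: "sg n a permutes {0..<n}" by (rule perm_gen[OF _ out cy]) (use dp in auto)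
  have ed: "2 \<le> path_dist (sg n a i) (sg n a j) \<and> path_dist (sg n a i) (sg n a j) \<le> 6"
    if "path_edge n i j" for i j
  proof -
    have sym: "path_dist u v = path_dist v u" for u v by (simp add: path_dist_def)
    from that consider "i + 1 = j" "j < n" | "j + 1 = i" "i < n" by (auto simp: path_edge_def)
    then show ?thesis
    proof cases
      case 1 then show ?thesis using edge[OF assms(1), of i] by simp
    next
      case 2 then show ?thesis using edge[OF assms(1), of j] sym by simp
    qed
  qed
  show ?thesis unfolding well_path_2placement_def two_placement_def in_path_power_def cycles_le_def
  proof (intro conjI allI impI ballI)
    show "sg n a permutes {0..<n}" by (rule pm)
    show "sg n a permutes {0..<n}" by (rule pm)
  next
    fix v assume "v < n" then show "sg n a v \<noteq> v" using dp by blast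
  next
    fix i j assume "path_edge n i j"
    then have "2 \<le> path_dist (sg n a i) (sg n a j)" using ed by blast
    then show "\<not> path_edge n (sg n a i) (sg n a j)" by (auto simp: path_edge_def path_dist_def)
  next
    fix i j assume "path_edge n i j" then show "path_dist (sg n a i) (sg n a j) \<le> 6" using ed by blast
  next
    show "path_dist x (sg n a x) \<le> 2" using dp assms(2) by blast
  next
    fix y assume "y \<in> path_nbrs n x" then show "path_dist y (sg n a y) \<le> 3" using dp nbrs_lt by fastforce
  next
    fix y assume "y < n" then show "path_dist y (sg n a y) \<le> 3" using dp by fastforce
  next
    fix v assume "v < n" then show "\<exists>k\<ge>1. k \<le> 5 \<and> (sg n a ^^ k) v = v" using cy by blast
  qed
qed

lemma decomp: "(n::nat) \<ge> 4 \<Longrightarrow> n \<noteq> 6 \<Longrightarrow> n \<noteq> 7 \<Longrightarrow> n \<noteq> 11 \<Longrightarrow> \<exists>a b. n = 4*a+5*b"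
  by presburger

definition lf :: "nat list \<Rightarrow> nat \<Rightarrow> nat" where
  "lf xs i = (if i < length xs then xs ! i else i)"

lemma all_upt: "(\<forall>v<n. P v) \<longleftrightarrow> (\<forall>v\<in>set [0..<n]. P v)" by auto

lemma nbrs_all: "x < n \<Longrightarrow> (\<forall>y\<in>path_nbrs n x. P y) \<longleftrightarrow> ((x+1 < n \<longrightarrow> P (x+1)) \<and> (0 < x \<longrightarrow> P (x-1)))"
proof -
  assume "x < n"
  then have e: "path_nbrs n x = (if x+1 < n then {x+1} else {}) \<union> (if 0 < x then {x-1} else {})"
    unfolding path_nbrs_def path_edge_def by auto
  show ?thesis unfolding e by auto
qed

lemma deg1: assumes "y < n" "2 \<le> n" shows "path_deg n y = 1 \<longleftrightarrow> (y = 0 \<or> y = n - 1)"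
proof -
  have e: "path_nbrs n y = (if y+1 < n then {y+1} else {}) \<union> (if 0 < y then {y-1} else {})"
    using assms unfolding path_nbrs_def path_edge_def by auto
  show ?thesis
  proof (cases "y = 0")
    case True then show ?thesis using assms e by (simp add: path_deg_def)
  next
    case False
    show ?thesis
    proof (cases "y+1 < n")
      case True
      have "card ({y+1} \<union> {y-1}) = 2" using False by (simp add: card_insert_if)
      then show ?thesis using True False e by (simp add: path_deg_def)
    next
      case False2: False
      then show ?thesis using False e assms by (simp add: path_deg_def)
    qed
  qed
qed

lemma cyc5: "f v = v \<or> f (f v) = v \<or> f (f (f v)) = v \<or> f (f (f (f v))) = v \<or> f (f (f (f (f v)))) = v
   \<Longrightarrow> \<exists>k. 1 \<le> k \<and> k \<le> 5 \<and> (f ^^ k) v = v"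
  apply (elim disjE)
  apply (rule exI[of _ 1]; simp)
  apply (rule exI[of _ 2]; simp add: numeral_eq_Suc)
  apply (rule exI[of _ 3]; simp add: numeral_eq_Suc)
  apply (rule exI[of _ 4]; simp add: numeral_eq_Suc)
  apply (rule exI[of _ 5]; simp add: numeral_eq_Suc)
  done

lemma concrete:
  assumes n: "n = length xs" "2 \<le> n" "x < n"
  and c1: "\<forall>v\<in>set [0..<n]. lf xs v < n \<and> lf xs v \<noteq> v \<and>
      (let f = lf xs in f v = v \<or> f (f v) = v \<or> f (f (f v)) = v \<or> f (f (f (f v))) = v \<or> f (f (f (f (f v)))) = v)"
  and c2: "\<forall>i\<in>set [0..<n-1]. 2 \<le> path_dist (lf xs i) (lf xs (i+1)) \<and> path_dist (lf xs i) (lf xs (i+1)) \<le> 6"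
  and c3: "path_dist x (lf xs x) \<le> 2" "x+1 < n \<longrightarrow> path_dist (x+1) (lf xs (x+1)) \<le> 3"
     "0 < x \<longrightarrow> path_dist (x-1) (lf xs (x-1)) \<le> 3"
     "path_dist 0 (lf xs 0) \<le> 3" "path_dist (n-1) (lf xs (n-1)) \<le> 3"
  shows "well_path_2placement n x (lf xs)"
proof -
  have cy: "\<And>i. i < n \<Longrightarrow> \<exists>k. 1 \<le> k \<and> k \<le> 5 \<and> (lf xs ^^ k) i = i"
    using c1 by (intro cyc5) (auto simp: Let_def)
  have pm: "lf xs permutes {0..<n}" by (rule perm_gen[OF _ _ cy]) (use c1 n in \<open>auto simp: lf_def\<close>)
  have ed: "2 \<le> path_dist (lf xs i) (lf xs j) \<and> path_dist (lf xs i) (lf xs j) \<le> 6"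
    if "path_edge n i j" for i j
  proof -
    have sym: "path_dist u v = path_dist v u" for u v by (simp add: path_dist_def)
    from that consider "i + 1 = j" "j < n" | "j + 1 = i" "i < n" by (auto simp: path_edge_def)
    then show ?thesis
    proof cases
      case 1 then show ?thesis using c2 by auto
    next
      case 2 then show ?thesis using c2 sym by fastforce
    qed
  qed
  show ?thesis unfolding well_path_2placement_def two_placement_def in_path_power_def cycles_le_def
  proof (intro conjI allI impI)
    show "lf xs permutes {0..<n}" by (rule pm)
    show "lf xs permutes {0..<n}" by (rule pm)
  next
    fix v assume "v < n" then show "lf xs v \<noteq> v" using c1 by auto
  next
    fix i j assume "path_edge n i j"
    then have "2 \<le> path_dist (lf xs i) (lf xs j)" using ed by blast
    then show "\<not> path_edge n (lf xs i) (lf xs j)" by (auto simp: path_edge_def path_dist_def)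
  next
    fix i j assume "path_edge n i j" then show "path_dist (lf xs i) (lf xs j) \<le> 6" using ed by blast
  next
    show "path_dist x (lf xs x) \<le> 2" using c3 by blast
  next
    show "\<forall>y\<in>path_nbrs n x. path_dist y (lf xs y) \<le> 3" using c3 n by (simp add: nbrs_all)
  next
    fix y assume "y < n" "path_deg n y = 1" then show "path_dist y (lf xs y) \<le> 3" using c3 n deg1 by auto
  next
    fix v assume "v < n" then show "\<exists>k\<ge>1. k \<le> 5 \<and> (lf xs ^^ k) v = v" using cy by blast
  qed
qed

lemma w6_0: "\<exists>\<sigma>. well_path_2placement 6 0 \<sigma>"
  by (intro exI[of _ "lf [1,3,5,0,2,4]"], rule concrete, simp_all add: lf_def path_dist_def Let_def upt_rec)

lemma w6_1: "\<exists>\<sigma>. well_path_2placement 6 1 \<sigma>"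
  by (intro exI[of _ "lf [1,3,5,0,2,4]"], rule concrete, simp_all add: lf_def path_dist_def Let_def upt_rec)

lemma w6_2: "\<exists>\<sigma>. well_path_2placement 6 2 \<sigma>"
  by (intro exI[of _ "lf [2,4,0,5,1,3]"], rule concrete, simp_all add: lf_def path_dist_def Let_def upt_rec)

lemma w6_3: "\<exists>\<sigma>. well_path_2placement 6 3 \<sigma>"
  by (intro exI[of _ "lf [2,4,0,5,1,3]"], rule concrete, simp_all add: lf_def path_dist_def Let_def upt_rec)

lemma w6_4: "\<exists>\<sigma>. well_path_2placement 6 4 \<sigma>"
  by (intro exI[of _ "lf [1,3,5,0,2,4]"], rule concrete, simp_all add: lf_def path_dist_def Let_def upt_rec)

lemma w6_5: "\<exists>\<sigma>. well_path_2placement 6 5 \<sigma>"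
  by (intro exI[of _ "lf [1,3,5,0,2,4]"], rule concrete, simp_all add: lf_def path_dist_def Let_def upt_rec)

lemma n6: "x < 6 \<Longrightarrow> \<exists>\<sigma>. well_path_2placement 6 x \<sigma>"
proof -
  assume "x < 6"
  then have "x = 0 \<or> x = 1 \<or> x = 2 \<or> x = 3 \<or> x = 4 \<or> x = 5" by presburger
  then show ?thesis using w6_0 w6_1 w6_2 w6_3 w6_4 w6_5 by (elim disjE) simp_all
qed

lemma w7_0: "\<exists>\<sigma>. well_path_2placement 7 0 \<sigma>"
  by (intro exI[of _ "lf [1,3,5,0,2,6,4]"], rule concrete, simp_all add: lf_def path_dist_def Let_def upt_rec)

lemma w7_1: "\<exists>\<sigma>. well_path_2placement 7 1 \<sigma>"
  by (intro exI[of _ "lf [1,3,5,0,2,6,4]"], rule concrete, simp_all add: lf_def path_dist_def Let_def upt_rec)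

lemma w7_2: "\<exists>\<sigma>. well_path_2placement 7 2 \<sigma>"
  by (intro exI[of _ "lf [1,4,0,5,2,6,3]"], rule concrete, simp_all add: lf_def path_dist_def Let_def upt_rec)

lemma w7_3: "\<exists>\<sigma>. well_path_2placement 7 3 \<sigma>"
  by (intro exI[of _ "lf [1,3,5,2,6,0,4]"], rule concrete, simp_all add: lf_def path_dist_def Let_def upt_rec)

lemma w7_4: "\<exists>\<sigma>. well_path_2placement 7 4 \<sigma>"
  by (intro exI[of _ "lf [1,3,5,0,2,6,4]"], rule concrete, simp_all add: lf_def path_dist_def Let_def upt_rec)

lemma w7_5: "\<exists>\<sigma>. well_path_2placement 7 5 \<sigma>"
  by (intro exI[of _ "lf [1,3,5,0,2,6,4]"], rule concrete, simp_all add: lf_def path_dist_def Let_def upt_rec)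

lemma w7_6: "\<exists>\<sigma>. well_path_2placement 7 6 \<sigma>"
  by (intro exI[of _ "lf [1,3,5,0,2,6,4]"], rule concrete, simp_all add: lf_def path_dist_def Let_def upt_rec)

lemma n7: "x < 7 \<Longrightarrow> \<exists>\<sigma>. well_path_2placement 7 x \<sigma>"
proof -
  assume "x < 7"
  then have "x = 0 \<or> x = 1 \<or> x = 2 \<or> x = 3 \<or> x = 4 \<or> x = 5 \<or> x = 6" by presburger
  then show ?thesis using w7_0 w7_1 w7_2 w7_3 w7_4 w7_5 w7_6 by (elim disjE) simp_all
qed

lemma w11_0: "\<exists>\<sigma>. well_path_2placement 11 0 \<sigma>"
  by (intro exI[of _ "lf [1,3,0,2,5,7,9,4,6,10,8]"], rule concrete, simp_all add: lf_def path_dist_def Let_def upt_rec)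

lemma w11_1: "\<exists>\<sigma>. well_path_2placement 11 1 \<sigma>"
  by (intro exI[of _ "lf [1,3,0,2,5,7,9,4,6,10,8]"], rule concrete, simp_all add: lf_def path_dist_def Let_def upt_rec)

lemma w11_2: "\<exists>\<sigma>. well_path_2placement 11 2 \<sigma>"
  by (intro exI[of _ "lf [1,3,0,2,5,7,9,4,6,10,8]"], rule concrete, simp_all add: lf_def path_dist_def Let_def upt_rec)

lemma w11_3: "\<exists>\<sigma>. well_path_2placement 11 3 \<sigma>"
  by (intro exI[of _ "lf [1,3,0,2,5,7,9,4,6,10,8]"], rule concrete, simp_all add: lf_def path_dist_def Let_def upt_rec)

lemma w11_4: "\<exists>\<sigma>. well_path_2placement 11 4 \<sigma>"
  by (intro exI[of _ "lf [1,3,0,2,5,7,9,4,6,10,8]"], rule concrete, simp_all add: lf_def path_dist_def Let_def upt_rec)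

lemma w11_5: "\<exists>\<sigma>. well_path_2placement 11 5 \<sigma>"
  by (intro exI[of _ "lf [1,3,0,2,5,7,9,4,6,10,8]"], rule concrete, simp_all add: lf_def path_dist_def Let_def upt_rec)

lemma w11_6: "\<exists>\<sigma>. well_path_2placement 11 6 \<sigma>"
  by (intro exI[of _ "lf [1,3,0,2,5,8,4,9,6,10,7]"], rule concrete, simp_all add: lf_def path_dist_def Let_def upt_rec)

lemma w11_7: "\<exists>\<sigma>. well_path_2placement 11 7 \<sigma>"
  by (intro exI[of _ "lf [1,3,0,2,5,7,9,6,10,4,8]"], rule concrete, simp_all add: lf_def path_dist_def Let_def upt_rec)

lemma w11_8: "\<exists>\<sigma>. well_path_2placement 11 8 \<sigma>"
  by (intro exI[of _ "lf [1,3,0,2,5,7,9,4,6,10,8]"], rule concrete, simp_all add: lf_def path_dist_def Let_def upt_rec)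

lemma w11_9: "\<exists>\<sigma>. well_path_2placement 11 9 \<sigma>"
  by (intro exI[of _ "lf [1,3,0,2,5,7,9,4,6,10,8]"], rule concrete, simp_all add: lf_def path_dist_def Let_def upt_rec)

lemma w11_10: "\<exists>\<sigma>. well_path_2placement 11 10 \<sigma>"
  by (intro exI[of _ "lf [1,3,0,2,5,7,9,4,6,10,8]"], rule concrete, simp_all add: lf_def path_dist_def Let_def upt_rec)

lemma n11: "x < 11 \<Longrightarrow> \<exists>\<sigma>. well_path_2placement 11 x \<sigma>"
proof -
  assume "x < 11"
  then have "x = 0 \<or> x = 1 \<or> x = 2 \<or> x = 3 \<or> x = 4 \<or> x = 5 \<or> x = 6 \<or> x = 7 \<or> x = 8 \<or> x = 9 \<or> x = 10" by presburger
  then show ?thesis using w11_0 w11_1 w11_2 w11_3 w11_4 w11_5 w11_6 w11_7 w11_8 w11_9 w11_10 by (elim disjE) simp_all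
qed

theorem theorem3p1:
  fixes n x :: nat
  assumes "n \<ge> 4" and "x < n"
  shows "\<exists>\<sigma>. well_path_2placement n x \<sigma>"
proof -
  consider "n = 6" | "n = 7" | "n = 11" | "n \<noteq> 6 \<and> n \<noteq> 7 \<and> n \<noteq> 11" by blast
  then show ?thesis
  proof cases
    case 1 then show ?thesis using n6 assms by simp
  next
    case 2 then show ?thesis using n7 assms by simp
  next
    case 3 then show ?thesis using n11 assms by simp
  next
    case 4
    then obtain a b where "n = 4*a+5*b" using decomp assms by blast
    then show ?thesis using main_case assms by blast
  qed
qed

end
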